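(* Assume there are $N$ pursuers with positions $\mathbf{x}_{P_i}$ and maximal speeds $u_i$, each faster than the evader ($\nu_i:=\nu_E/u_i<1$), and $\mathbf{x}_E(t_0)\neq\mathbf{x}_{P_i}(t_0)$ for all $i$. Let $\mathcal I=\bigcap_{i}\mathcal A_i(t_0)$. Suppose each pursuer $i$ independently uses (after normalizing its speed) the law $\mathbf{v}_{P_i}=u_i\,\mathbf{z}_{P_i}/\|\mathbf{z}_{P_i}\|$, $\mathbf{z}_{P_i}=(R_{\mathcal C_i}-R_{\mathcal A_i})\mathbf{r}_i/\|\mathbf{r}_i\|+\nu_i\mathbf{y}_i$, with parameter $\delta>0$. Then for every admissible evader control, capture by some pursuer occurs in finite time at a point of $\bigcap_i\mathcal C_i$; consequently, for a closed target set $\mathcal T$ with $\mathcal I\cap\mathcal T=\emptyset$, for all sufficiently small $\delta>0$ the pursuers win the Generalized Target Guarding game.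
   Context: Setting: planar simple motion. The evader has position $\mathbf{x}_E$ with $\dot{\mathbf{x}}_E=\mathbf{v}_E$, $\|\mathbf{v}_E\|\le\nu_E$; pursuer $i$ has position $\mathbf{x}_{P_i}$ with $\dot{\mathbf{x}}_{P_i}=\mathbf{v}_{P_i}$, $\|\mathbf{v}_{P_i}\|\le u_i$. Capture occurs at the first time some $\mathbf{x}_{P_i}=\mathbf{x}_E$. For each $i$, with $\nu_i=\nu_E/u_i<1$, set $\alpha_i=1/(1-\nu_i^2)$, $\gamma_i=\nu_i\alpha_i$, $\beta_i=\nu_i^2\alpha_i$, $\mathbf{r}_i=\mathbf{x}_E-\mathbf{x}_{P_i}$; the Apollonius disc $\mathcal A_i(t)$ is the closed disc with center $\mathbf{x}_{\mathcal A_i}(t)=\alpha_i\mathbf{x}_E(t)-\beta_i\mathbf{x}_{P_i}(t)$ and radius $R_{\mathcal A_i}(t)=\gamma_i\|\mathbf{r}_i(t)\|$; $\mathcal C_i$ is the closed disc with center $\mathbf{x}_{\mathcal C_i}=\mathbf{x}_{\mathcal A_i}(t_0)$ and radius $R_{\mathcal C_i}=R_{\mathcal A_i}(t_0)+\delta$; $\mathbf{y}_i=\mathbf{x}_{\mathcal A_i}-\mathbf{x}_{\mathcal C_i}$. Generalized Target Guarding: the evader wins if it reaches a point of $\mathcal T$ no later than capture; the pursuers win if capture occurs strictly before. *)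

theory Defs
  imports "HOL-Analysis.Analysis"
begin

type_synonym pt = "real^2"

definition nu_ratio :: "real \<Rightarrow> real \<Rightarrow> real" where
  "nu_ratio nuE u = nuE / u"
definition alpha_c :: "real \<Rightarrow> real \<Rightarrow> real" where
  "alpha_c nuE u = 1 / (1 - (nu_ratio nuE u)^2)"
definition gamma_c :: "real \<Rightarrow> real \<Rightarrow> real" where
  "gamma_c nuE u = nu_ratio nuE u * alpha_c nuE u"
definition beta_c :: "real \<Rightarrow> real \<Rightarrow> real" where
  "beta_c nuE u = (nu_ratio nuE u)^2 * alpha_c nuE u"

definition apoll_center :: "real \<Rightarrow> real \<Rightarrow> pt \<Rightarrow> pt \<Rightarrow> pt" where
  "apoll_center nuE u xE xP = alpha_c nuE u *\<^sub>R xE - beta_c nuE u *\<^sub>R xP"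
definition apoll_radius :: "real \<Rightarrow> real \<Rightarrow> pt \<Rightarrow> pt \<Rightarrow> real" where
  "apoll_radius nuE u xE xP = gamma_c nuE u * norm (xE - xP)"
definition apoll_disc :: "real \<Rightarrow> real \<Rightarrow> pt \<Rightarrow> pt \<Rightarrow> pt set" where
  "apoll_disc nuE u xE xP = cball (apoll_center nuE u xE xP) (apoll_radius nuE u xE xP)"

definition C_disc :: "real \<Rightarrow> real \<Rightarrow> real \<Rightarrow> pt \<Rightarrow> pt \<Rightarrow> pt set" where
  "C_disc nuE u \<delta> xE0 xP0 = cball (apoll_center nuE u xE0 xP0) (apoll_radius nuE u xE0 xP0 + \<delta>)"

definition pursuer_vel :: "real \<Rightarrow> real \<Rightarrow> real \<Rightarrow> pt \<Rightarrow> pt \<Rightarrow> pt \<Rightarrow> pt \<Rightarrow> pt" where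
  "pursuer_vel nuE u \<delta> xE0 xP0 xE xP =
     (let RC = apoll_radius nuE u xE0 xP0 + \<delta>;
          RA = apoll_radius nuE u xE xP;
          r = xE - xP;
          y = apoll_center nuE u xE xP - apoll_center nuE u xE0 xP0;
          z = (RC - RA) *\<^sub>R ((1 / norm r) *\<^sub>R r) + nu_ratio nuE u *\<^sub>R y
      in (u / norm z) *\<^sub>R z)"

definition captured :: "nat \<Rightarrow> (real \<Rightarrow> pt) \<Rightarrow> (nat \<Rightarrow> real \<Rightarrow> pt) \<Rightarrow> real \<Rightarrow> bool" where
  "captured N xE xP t \<longleftrightarrow> (\<exists>i<N. xP i t = xE t)"

text \<open>Admissible evader trajectory: speed bounded by nuE, i.e. nuE-Lipschitz on [t0,oo).\<close>
definition admissible_evader :: "real \<Rightarrow> real \<Rightarrow> (real \<Rightarrow> pt) \<Rightarrow> bool" where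
  "admissible_evader nuE t0 xE \<longleftrightarrow>
     (\<forall>s t. t0 \<le> s \<longrightarrow> t0 \<le> t \<longrightarrow> norm (xE t - xE s) \<le> nuE * \<bar>t - s\<bar>)"

definition follows_law ::
  "nat \<Rightarrow> (nat \<Rightarrow> real) \<Rightarrow> real \<Rightarrow> real \<Rightarrow> real \<Rightarrow> (real \<Rightarrow> pt) \<Rightarrow> (nat \<Rightarrow> real \<Rightarrow> pt) \<Rightarrow> bool" where
  "follows_law N u nuE \<delta> t0 xE xP \<longleftrightarrow>
     (\<forall>i<N. continuous_on {t0..} (xP i)) \<and>
     (\<forall>t\<ge>t0. (\<forall>s\<in>{t0..t}. \<not> captured N xE xP s) \<longrightarrow>
        (\<forall>i<N. (xP i has_vector_derivative
                   pursuer_vel nuE (u i) \<delta> (xE t0) (xP i t0) (xE t) (xP i t))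
                (at t within {t0..})))"

definition capture_time :: "nat \<Rightarrow> real \<Rightarrow> (real \<Rightarrow> pt) \<Rightarrow> (nat \<Rightarrow> real \<Rightarrow> pt) \<Rightarrow> real \<Rightarrow> bool" where
  "capture_time N t0 xE xP T \<longleftrightarrow>
     t0 \<le> T \<and> captured N xE xP T \<and> (\<forall>s\<in>{t0..<T}. \<not> captured N xE xP s)"

definition pursuers_win :: "nat \<Rightarrow> real \<Rightarrow> pt set \<Rightarrow> (real \<Rightarrow> pt) \<Rightarrow> (nat \<Rightarrow> real \<Rightarrow> pt) \<Rightarrow> bool" where
  "pursuers_win N t0 Tg xE xP \<longleftrightarrow>
     (\<exists>T. capture_time N t0 xE xP T \<and> (\<forall>s\<in>{t0..T}. xE s \<notin> Tg))"

end

theory Submission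
  imports Defs
begin

lemma dini_comp:
  fixes f :: "real \<Rightarrow> real"
  assumes ab: "a \<le> b" and cont: "continuous_on {a..b} f" and c: "0 \<le> c" and L: "L < f a"
    and loc: "\<And>t \<epsilon>. t \<in> {a..<b} \<Longrightarrow> L < f t \<Longrightarrow> 0 < \<epsilon> \<Longrightarrow>
        \<exists>d>0. \<forall>s. 0 < s \<and> s < d \<longrightarrow> f t + (c - \<epsilon>) * s \<le> f (t + s)"
  shows "f a + c * (b - a) \<le> f b"
proof (rule ccontr)
  assume neg: "\<not> ?thesis"
  have ba: "a < b" using neg ab by (cases "a = b") auto
  define M where "M = min (f a + c*(b-a) - f b) (f a - L)"
  have M: "M > 0" using neg L unfolding M_def by auto
  define \<epsilon> where "\<epsilon> = M / (2*(b-a))"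
  have ep: "\<epsilon> > 0" using M ba unfolding \<epsilon>_def by auto
  have epM: "\<epsilon> * (b-a) < M" using M ba unfolding \<epsilon>_def by (simp add: field_simps)
  define g where "g x = f x - f a - (c - \<epsilon>) * (x - a)" for x
  have gcont: "continuous_on {a..b} g" unfolding g_def by (intro continuous_intros cont)
  have gb: "g b < 0" using epM unfolding g_def M_def by (auto simp: left_diff_distrib)
  define S where "S = {x\<in>{a..b}. g x < 0}"
  have bS: "b \<in> S" using gb ab by (auto simp: S_def)
  have bdd: "bdd_below S" unfolding S_def by (rule bdd_belowI[of _ a]) auto
  define m where "m = Inf S"
  have am: "a \<le> m" unfolding m_def using bS by (intro cInf_greatest) (auto simp: S_def)
  have mb: "m \<le> b" unfolding m_def using bS bdd by (intro cInf_lower)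
  have below: "g x \<ge> 0" if "a \<le> x" "x < m" for x
  proof (rule ccontr)
    assume "\<not> g x \<ge> 0"
    hence "x \<in> S" using that mb by (auto simp: S_def)
    hence "m \<le> x" unfolding m_def using bdd by (intro cInf_lower)
    thus False using that by auto
  qed
  have gm: "g m \<ge> 0"
  proof (rule ccontr)
    assume gneg: "\<not> g m \<ge> 0"
    have "m \<noteq> a" using gneg unfolding g_def by auto
    hence am': "a < m" using am by auto
    from gcont have "\<exists>d>0. \<forall>x'\<in>{a..b}. dist x' m < d \<longrightarrow> dist (g x') (g m) < - g m"
      unfolding continuous_on_iff using am mb gneg by auto
    then obtain d where d: "d > 0" "\<And>x'. x' \<in> {a..b} \<Longrightarrow> dist x' m < d \<Longrightarrow> dist (g x') (g m) < - g m"
      by blast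
    define x where "x = max a (m - d/2)"
    have x: "x \<in> {a..b}" "dist x m < d" "a \<le> x" "x < m" using am' mb d(1) unfolding x_def dist_real_def by auto
    have "g x < 0" using d(2)[OF x(1,2)] gneg unfolding dist_real_def by auto
    thus False using below[OF x(3,4)] by auto
  qed
  have mb': "m < b" using gm gb mb by (cases "m = b") auto
  have fm: "L < f m"
  proof -
    have "f m = g m + f a + (c - \<epsilon>) * (m - a)" unfolding g_def by simp
    moreover have "(c - \<epsilon>) * (m - a) \<ge> - \<epsilon> * (b - a)"
    proof -
      have "(c - \<epsilon>) * (m - a) \<ge> - \<epsilon> * (m - a)" using c am by (intro mult_right_mono) auto
      moreover have "- \<epsilon> * (m - a) \<ge> - \<epsilon> * (b - a)" using ep mb by (intro mult_left_mono_neg) auto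
      ultimately show ?thesis by linarith
    qed
    ultimately show ?thesis using gm epM unfolding M_def by auto
  qed
  obtain d where d: "d > 0" "\<And>s. 0 < s \<and> s < d \<Longrightarrow> f m + (c - \<epsilon>/2) * s \<le> f (m + s)"
    using loc[of m "\<epsilon>/2"] am mb' fm ep by auto
  have "m + min d (b - m) \<le> Inf S"
  proof (rule cInf_greatest)
    show "S \<noteq> {}" using bS by auto
  next
    fix x assume xS: "x \<in> S"
    show "m + min d (b - m) \<le> x"
    proof (rule ccontr)
      assume "\<not> ?thesis"
      hence xl: "x < m + min d (b - m)" by auto
      have xa: "a \<le> x" "g x < 0" using xS by (auto simp: S_def)
      show False
      proof (cases "x < m")
        case True thus False using below xa by force
      next
        case False
        hence "x = m \<or> x > m" by auto
        thus False
        proof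
          assume "x = m" thus False using gm xa by auto
        next
          assume xm: "x > m"
          have "f m + (c - \<epsilon>/2) * (x - m) \<le> f (m + (x - m))" using d(2)[of "x - m"] xm xl by auto
          hence "f m + (c - \<epsilon>/2) * (x - m) \<le> f x" by simp
          have e1: "g x - g m = (f x - f m) - (c - \<epsilon>) * (x - m)" unfolding g_def by (simp add: algebra_simps)
          have e2: "(c - \<epsilon>/2) * (x - m) - (c - \<epsilon>) * (x - m) = (\<epsilon>/2) * (x - m)" by (simp add: field_simps)
          have "g x \<ge> g m + (\<epsilon>/2) * (x - m)" using e1 e2 \<open>f m + (c - \<epsilon>/2) * (x - m) \<le> f x\<close> by linarith
          moreover have "(\<epsilon>/2) * (x - m) > 0" using ep xm by auto
          ultimately show False using gm xa by auto
        qed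
      qed
    qed
  qed
  thus False using d(1) mb' unfolding m_def[symmetric] by auto
qed

lemma norm_add_lower:
  fixes r d :: "'a::real_inner"
  assumes "r \<noteq> 0"
  shows "norm r + (r \<bullet> d) / norm r \<le> norm (r + d)"
proof -
  have n: "norm r > 0" using assms by auto
  have "r \<bullet> (r + d) \<le> norm r * norm (r + d)" by (rule norm_cauchy_schwarz)
  moreover have "r \<bullet> (r + d) = (norm r)^2 + r \<bullet> d" by (simp add: inner_add_right power2_norm_eq_inner)
  ultimately have "(norm r)^2 + r \<bullet> d \<le> norm r * norm (r + d)" by simp
  hence "((norm r)^2 + r \<bullet> d) / norm r \<le> norm (r + d)" using n by (simp add: divide_le_eq mult.commute)
  moreover have "((norm r)^2 + r \<bullet> d) / norm r = norm r + (r \<bullet> d) / norm r"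
    using n by (simp add: field_simps power2_eq_square)
  ultimately show ?thesis by simp
qed

lemma norm_add_upper:
  fixes r d :: "'a::real_inner"
  assumes "r \<noteq> 0"
  shows "norm (r + d) \<le> norm r + (r \<bullet> d) / norm r + (norm d)^2 / norm r"
proof -
  define n where "n = norm r"
  define p where "p = r \<bullet> d"
  define D where "D = norm d"
  have n: "n > 0" using assms by (simp add: n_def)
  have pD: "\<bar>p\<bar> \<le> n * D" unfolding p_def n_def D_def by (rule Cauchy_Schwarz_ineq2)
  have D0: "D \<ge> 0" by (simp add: D_def)
  have sq: "(norm (r + d))^2 = n^2 + 2 * p + D^2"
    by (simp add: n_def p_def D_def power2_norm_eq_inner inner_add_left inner_add_right inner_commute)
  define R where "R = n + p / n + D^2 / n"
  have Rn: "R * n = n^2 + p + D^2" using n unfolding R_def by (simp add: field_simps power2_eq_square)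
  have R0: "R \<ge> 0"
  proof -
    have "n^2 + p + D^2 \<ge> n^2 - n * D + D^2" using pD by linarith
    moreover have "n^2 - n * D + D^2 \<ge> 0"
    proof -
      have "n^2 - n * D + D^2 = (n - D/2)^2 + 3/4 * D^2" by (simp add: power2_eq_square algebra_simps)
      moreover have "(n - D/2)^2 \<ge> 0" by simp
      moreover have "3/4 * D^2 \<ge> 0" by simp
      ultimately show ?thesis by linarith
    qed
    ultimately have "R * n \<ge> 0" using Rn by linarith
    thus ?thesis using n by (simp add: zero_le_mult_iff)
  qed
  have key: "(R * n)^2 - n^2 * (n^2 + 2 * p + D^2) \<ge> 0"
  proof -
    have e: "(R * n)^2 - n^2 * (n^2 + 2 * p + D^2) = p^2 + D^4 + n^2 * D^2 + 2 * p * D^2"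
      unfolding Rn by (simp add: power2_eq_square power4_eq_xxxx algebra_simps)
    have "2 * p * D^2 \<ge> - 2 * n * D * D^2"
    proof -
      have "p \<ge> - (n * D)" using pD by linarith
      hence h: "p * D^2 \<ge> - (n * D) * D^2" by (rule mult_right_mono) simp
      have "2 * p * D^2 = 2 * (p * D^2)" "- 2 * n * D * D^2 = 2 * (- (n * D) * D^2)" by algebra+
      thus ?thesis using h by linarith
    qed
    moreover have "p^2 + D^4 + n^2 * D^2 - 2 * n * D * D^2 = p^2 + (D * (D - n))^2"
      by (simp add: power2_eq_square power4_eq_xxxx algebra_simps)
    moreover have "p^2 + (D * (D - n))^2 \<ge> 0" by simp
    ultimately show ?thesis using e by linarith
  qed
  hence "(R * n)^2 \<ge> (n * norm (r + d))^2" by (simp add: power_mult_distrib sq)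
  hence "n * norm (r + d) \<le> R * n"
    by (rule power2_le_imp_le) (use R0 n in simp)
  hence "n * norm (r + d) \<le> n * R" by (simp add: mult.commute)
  hence "norm (r + d) \<le> R" using n by (simp add: mult_le_cancel_left_pos)
  thus ?thesis unfolding R_def n_def p_def D_def .
qed

lemma aux_lin1:
  fixes A B R X Y c d :: real
  assumes "A - 2*X \<le> B" "R - 2*Y \<le> A"
  shows "- Y - X - c - d/2 \<le> (B - R)/2 - (2*c + d)/2"
  unfolding diff_divide_distrib add_divide_distrib using assms by linarith

lemma H_incr:
  fixes r dr y dy :: "'a::real_inner"
  assumes r: "r \<noteq> 0" and g: "\<gamma> \<ge> 0"
  shows "((RC - \<gamma>*norm(r+dr))^2 - (norm(y+dy))^2)/2 - ((RC - \<gamma>*norm r)^2 - (norm y)^2)/2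
     \<ge> - ((RC - \<gamma>*norm r)*\<gamma>*((r\<bullet>dr)/norm r)) - y\<bullet>dy
        - ((\<bar>RC - \<gamma>*norm r\<bar> + \<gamma>*norm dr)*\<gamma>*(norm dr)^2/norm r + (norm dy)^2/2)"
proof -
  define n where "n = norm r"
  define p where "p = r \<bullet> dr"
  define \<rho> where "\<rho> = RC - \<gamma>*norm r"
  define q where "q = norm (r+dr) - n - p/n"
  define a where "a = \<rho> - \<gamma>*(p/n)"
  have n: "n > 0" using r by (simp add: n_def)
  have q0: "q \<ge> 0" using norm_add_lower[OF r, of dr] unfolding q_def n_def p_def by simp
  have q1: "q \<le> (norm dr)^2/n" using norm_add_upper[OF r, of dr] unfolding q_def n_def p_def by simp
  have e1: "RC - \<gamma>*norm(r+dr) = a - \<gamma>*q" unfolding a_def q_def \<rho>_def n_def by (simp add: algebra_simps)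
  have gq: "\<gamma>*q \<ge> 0" using g q0 by simp
  have s1: "(a - \<gamma>*q)^2 \<ge> a^2 - 2*(\<bar>a\<bar>*(\<gamma>*q))"
  proof -
    have "(a - \<gamma>*q)^2 = a^2 - 2*(a*(\<gamma>*q)) + (\<gamma>*q)^2" by (simp add: power2_eq_square algebra_simps)
    moreover have "a*(\<gamma>*q) \<le> \<bar>a\<bar>*(\<gamma>*q)" using gq by (intro mult_right_mono) auto
    moreover have "(\<gamma>*q)^2 \<ge> 0" by simp
    ultimately show ?thesis by linarith
  qed
  have s2: "a^2 \<ge> \<rho>^2 - 2*(\<rho>*\<gamma>*(p/n))"
  proof -
    have "a^2 = \<rho>^2 - 2*(\<rho>*\<gamma>*(p/n)) + (\<gamma>*(p/n))^2" unfolding a_def by (simp add: power2_eq_square algebra_simps)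
    moreover have "(\<gamma>*(p/n))^2 \<ge> 0" by simp
    ultimately show ?thesis by linarith
  qed
  have pn: "\<bar>p/n\<bar> \<le> norm dr"
  proof -
    have "\<bar>p\<bar> \<le> n * norm dr" unfolding p_def n_def by (rule Cauchy_Schwarz_ineq2)
    thus ?thesis using n by (simp add: abs_divide divide_le_eq mult.commute)
  qed
  have s3: "\<bar>a\<bar> \<le> \<bar>\<rho>\<bar> + \<gamma>*norm dr"
  proof -
    have "\<bar>\<gamma>*(p/n)\<bar> = \<gamma>*\<bar>p/n\<bar>" using g by (simp add: abs_mult)
    also have "\<dots> \<le> \<gamma>*norm dr" using pn g by (rule mult_left_mono)
    finally have "\<bar>\<gamma>*(p/n)\<bar> \<le> \<gamma>*norm dr" .
    thus ?thesis unfolding a_def by linarith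
  qed
  have s4: "\<bar>a\<bar>*(\<gamma>*q) \<le> (\<bar>\<rho>\<bar> + \<gamma>*norm dr)*\<gamma>*(norm dr)^2/n"
  proof -
    have "\<gamma>*q \<le> \<gamma>*((norm dr)^2/n)" using q1 g by (rule mult_left_mono)
    hence "\<bar>a\<bar>*(\<gamma>*q) \<le> (\<bar>\<rho>\<bar> + \<gamma>*norm dr)*(\<gamma>*((norm dr)^2/n))"
      using s3 gq q1 g q0 by (intro mult_mono) auto
    thus ?thesis by simp
  qed
  have s5: "(norm (y+dy))^2 = (norm y)^2 + 2*(y\<bullet>dy) + (norm dy)^2"
    by (simp add: power2_norm_eq_inner inner_add_left inner_add_right inner_commute)
  have "((RC - \<gamma>*norm(r+dr))^2 - (norm(y+dy))^2)/2 - ((RC - \<gamma>*norm r)^2 - (norm y)^2)/2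
      = ((a - \<gamma>*q)^2 - \<rho>^2)/2 - (2*(y\<bullet>dy) + (norm dy)^2)/2"
    unfolding e1 s5 \<rho>_def by (simp add: field_simps)
  also have "\<dots> \<ge> - (\<rho>*\<gamma>*(p/n)) - \<bar>a\<bar>*(\<gamma>*q) - y\<bullet>dy - (norm dy)^2/2"
    using aux_lin1[OF s1 s2] by simp
  finally show ?thesis using s4 unfolding \<rho>_def p_def n_def by linarith
qed

lemma lin_id:
  fixes r y dE dP :: "'a::real_inner"
  assumes "n \<noteq> 0" "w \<noteq> 0"
  shows "- (\<rho>*g*((r \<bullet> (dE - dP))/n)) - y \<bullet> ((g / w) *\<^sub>R dE - (w * g) *\<^sub>R dP)
     = g*(dP \<bullet> (\<rho> *\<^sub>R ((1/n) *\<^sub>R r) + w *\<^sub>R y)) - g*(dE \<bullet> (\<rho> *\<^sub>R ((1/n) *\<^sub>R r) + (1 / w) *\<^sub>R y))"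
proof -
  have a: "dP \<bullet> r = r \<bullet> dP" "dE \<bullet> r = r \<bullet> dE" "dP \<bullet> y = y \<bullet> dP" "dE \<bullet> y = y \<bullet> dE"
    by (simp_all add: inner_commute)
  show ?thesis using assms
    by (simp add: inner_diff_right inner_add_right inner_scaleR_right a field_simps)
qed

lemma norm_diff_sq_id:
  fixes rh y :: "'a::real_inner"
  assumes "norm rh = 1"
  shows "(norm (\<rho> *\<^sub>R rh + v *\<^sub>R y))^2 - (norm ((v * \<rho>) *\<^sub>R rh + y))^2 = (1 - v^2) * (\<rho>^2 - (norm y)^2)"
proof -
  have r: "rh \<bullet> rh = 1" using assms by (simp add: power2_norm_eq_inner[symmetric])
  have c: "y \<bullet> rh = rh \<bullet> y" by (simp add: inner_commute)
  show ?thesis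
    unfolding power2_norm_eq_inner by (simp add: inner_add_left inner_add_right r c algebra_simps power2_eq_square)
qed

lemma evader_cont:
  assumes "admissible_evader nuE t0 xE" "0 \<le> nuE"
  shows "continuous_on {t0..} xE"
proof (rule lipschitz_on_continuous_on)
  show "nuE-lipschitz_on {t0..} xE"
    using assms by (intro lipschitz_onI) (auto simp: admissible_evader_def dist_norm abs_minus_commute norm_minus_commute)
qed

lemma aux_rate:
  fixes r g A B c Q h :: real
  shows "r = g*(A - B) \<Longrightarrow> (A-B)*(A+B) = A^2 - B^2 \<Longrightarrow> A^2 - B^2 = c*Q \<Longrightarrow> 2*h = Q \<Longrightarrow> r*(A+B) = g*(c*(2*h))"
  by simp

locale pur =
  fixes nuE u \<delta> :: real and xE0 xP0 :: pt
  assumes nuE_pos: "0 < nuE" and u_pos: "0 < u" and ratio: "nu_ratio nuE u < 1"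
    and dpos: "0 < \<delta>" and init: "xE0 \<noteq> xP0"
begin

definition "nv = nu_ratio nuE u"
definition "al = alpha_c nuE u"
definition "be = beta_c nuE u"
definition "ga = gamma_c nuE u"
definition "RC = apoll_radius nuE u xE0 xP0 + \<delta>"
definition "cC = apoll_center nuE u xE0 xP0"
definition "rho E P = RC - apoll_radius nuE u E P" for E P :: pt
definition "yv E P = apoll_center nuE u E P - cC" for E P :: pt
definition "hh E P = ((rho E P)^2 - (norm (yv E P))^2) / 2" for E P :: pt
definition "zv E P = rho E P *\<^sub>R ((1 / norm (E - P)) *\<^sub>R (E - P)) + nv *\<^sub>R yv E P" for E P :: pt
definition "wv E P = rho E P *\<^sub>R ((1 / norm (E - P)) *\<^sub>R (E - P)) + (1/nv) *\<^sub>R yv E P" for E P :: pt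

lemma nv_pos: "0 < nv" and nv_lt1: "nv < 1"
  using nuE_pos u_pos ratio by (auto simp: nv_def nu_ratio_def)

lemma one_m: "0 < 1 - nv^2"
proof -
  have "nv^2 < 1" using nv_pos nv_lt1 by (simp add: power_less_one_iff abs_less_iff)
  thus ?thesis by simp
qed

lemma al_eq: "al = 1 / (1 - nv^2)" by (simp add: al_def alpha_c_def nv_def)
lemma ga_eq: "ga = nv * al" by (simp add: ga_def gamma_c_def al_def nv_def)
lemma be_eq: "be = nv^2 * al" by (simp add: be_def beta_c_def al_def nv_def)
lemma al_pos: "0 < al" using one_m by (simp add: al_eq)
lemma ga_pos: "0 < ga" using nv_pos al_pos by (simp add: ga_eq)
lemma be_ga: "be = nv * ga" by (simp add: be_eq ga_eq power2_eq_square)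
lemma al_ga: "al = ga / nv" using nv_pos by (simp add: ga_eq)
lemma be_nonneg: "0 \<le> be" using al_pos by (simp add: be_eq)
lemma be_le_ga: "be \<le> ga" using nv_lt1 ga_pos by (simp add: be_ga)
lemma nuE_mult: "nuE * a = u * (nv * a)" using u_pos by (simp add: nv_def nu_ratio_def)

lemma rho_eq: "rho E P = RC - ga * norm (E - P)"
  by (simp add: rho_def apoll_radius_def ga_def)
lemma yv_eq: "yv E P = al *\<^sub>R E - be *\<^sub>R P - cC"
  by (simp add: yv_def apoll_center_def al_def be_def)

lemma vel_eq: "pursuer_vel nuE u \<delta> xE0 xP0 E P = (u / norm (zv E P)) *\<^sub>R zv E P"
  by (simp add: pursuer_vel_def Let_def zv_def rho_def yv_def RC_def cC_def nv_def)

lemma vel_z: "pursuer_vel nuE u \<delta> xE0 xP0 E P \<bullet> zv E P = u * norm (zv E P)"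
  by (simp add: vel_eq power2_norm_eq_inner[symmetric] power2_eq_square)

lemma vel_norm: "norm (pursuer_vel nuE u \<delta> xE0 xP0 E P) \<le> u"
  using u_pos by (simp add: vel_eq)

lemma hh_incr:
  assumes "E \<noteq> P"
  shows "hh (E+dE) (P+dP) - hh E P \<ge> ga*(dP \<bullet> zv E P) - ga*(dE \<bullet> wv E P)
     - ((\<bar>rho E P\<bar> + ga*norm (dE - dP))*ga*(norm (dE - dP))^2/norm (E - P)
        + (norm (al *\<^sub>R dE - be *\<^sub>R dP))^2/2)"
proof -
  have r: "E - P \<noteq> 0" using assms by simp
  have H: "((RC - ga*norm((E - P)+(dE - dP)))^2 - (norm(yv E P + (al *\<^sub>R dE - be *\<^sub>R dP)))^2)/2
      - ((RC - ga*norm (E - P))^2 - (norm (yv E P))^2)/2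
     \<ge> - ((RC - ga*norm (E - P))*ga*(((E - P)\<bullet>(dE - dP))/norm (E - P))) - yv E P \<bullet> (al *\<^sub>R dE - be *\<^sub>R dP)
        - ((\<bar>RC - ga*norm (E - P)\<bar> + ga*norm (dE - dP))*ga*(norm (dE - dP))^2/norm (E - P)
           + (norm (al *\<^sub>R dE - be *\<^sub>R dP))^2/2)"
    by (rule H_incr[OF r]) (use ga_pos in simp)
  have e1: "(E + dE) - (P + dP) = (E - P) + (dE - dP)" by (simp add: algebra_simps)
  have e2: "yv (E+dE) (P+dP) = yv E P + (al *\<^sub>R dE - be *\<^sub>R dP)"
    by (simp add: yv_eq algebra_simps)
  have lhs: "hh (E+dE) (P+dP) - hh E P = ((RC - ga*norm((E - P)+(dE - dP)))^2 - (norm(yv E P + (al *\<^sub>R dE - be *\<^sub>R dP)))^2)/2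
      - ((RC - ga*norm (E - P))^2 - (norm (yv E P))^2)/2"
    unfolding hh_def rho_eq e2 e1 ..
  have lin: "- ((RC - ga*norm (E - P))*ga*(((E - P)\<bullet>(dE - dP))/norm (E - P))) - yv E P \<bullet> (al *\<^sub>R dE - be *\<^sub>R dP)
     = ga*(dP \<bullet> zv E P) - ga*(dE \<bullet> wv E P)"
    unfolding zv_def wv_def rho_eq al_ga be_ga
    by (rule lin_id) (use r nv_pos in auto)
  show ?thesis using H unfolding lhs lin rho_eq .
qed

definition "rate E P = ga * (u * norm (zv E P) - nuE * norm (wv E P))" for E P :: pt

lemma local_rate:
  fixes xE xP :: "real \<Rightarrow> pt"
  assumes adm: "admissible_evader nuE t0 xE" and t: "t0 \<le> t" and ne: "xE t \<noteq> xP t"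
    and der: "(xP has_vector_derivative pursuer_vel nuE u \<delta> xE0 xP0 (xE t) (xP t)) (at t within {t0..})"
    and ep: "0 < \<epsilon>"
  shows "\<exists>d>0. \<forall>s. 0 < s \<and> s < d \<longrightarrow>
           hh (xE t) (xP t) + (rate (xE t) (xP t) - \<epsilon>) * s \<le> hh (xE (t+s)) (xP (t+s))"
proof -
  define E where "E = xE t"
  define P where "P = xP t"
  define vP where "vP = pursuer_vel nuE u \<delta> xE0 xP0 E P"
  define z where "z = zv E P"
  define w where "w = wv E P"
  define n where "n = norm (E - P)"
  define \<rho> where "\<rho> = rho E P"
  have n: "n > 0" using ne by (simp add: n_def E_def P_def)
  have ga: "ga > 0" by (rule ga_pos)
  define e where "e = \<epsilon> / (2*(ga*norm z + 1))"
  have gz: "ga * norm z \<ge> 0" using ga by simp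
  have e: "e > 0" using ep gz by (simp add: e_def)
  have ez: "e * (ga * norm z) \<le> \<epsilon>/2"
  proof -
    have "e * (ga * norm z) = (\<epsilon>/2) * ((ga*norm z) / (ga*norm z + 1))" by (simp add: e_def field_simps)
    also have "\<dots> \<le> (\<epsilon>/2) * 1" using ep gz by (intro mult_left_mono) auto
    finally show ?thesis by simp
  qed
  have "bounded_linear (\<lambda>h. h *\<^sub>R vP) \<and> (\<forall>e>0. \<exists>d>0. \<forall>y\<in>{t0..}. norm (y - t) < d \<longrightarrow>
        norm (xP y - xP t - (y - t) *\<^sub>R vP) \<le> e * norm (y - t))"
    using der unfolding has_vector_derivative_def has_derivative_within_alt vP_def E_def P_def .
  then obtain d1 where d1: "d1 > 0" "\<And>y. y \<in> {t0..} \<Longrightarrow> norm (y - t) < d1 \<Longrightarrow>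
        norm (xP y - xP t - (y - t) *\<^sub>R vP) \<le> e * norm (y - t)"
    using e by blast
  have uv: "norm vP \<le> u" unfolding vP_def by (rule vel_norm)
  have vz: "vP \<bullet> z = u * norm z" unfolding vP_def z_def by (rule vel_z)
  define k1 where "k1 = nuE + u + e"
  define k2 where "k2 = al*nuE + be*(u+e)"
  define K where "K = (\<bar>\<rho>\<bar> + ga*k1)*ga*k1^2/n + k2^2/2"
  have k1: "k1 \<ge> 0" using nuE_pos u_pos e by (simp add: k1_def)
  have k2: "k2 \<ge> 0" unfolding k2_def using nuE_pos u_pos e al_pos be_nonneg
    by (intro add_nonneg_nonneg mult_nonneg_nonneg) auto
  have K: "K \<ge> 0" unfolding K_def using k1 ga n by (intro add_nonneg_nonneg) auto
  define d where "d = min d1 (min 1 (\<epsilon> / (2*K+2)))"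
  have d: "d > 0" using d1 ep K by (simp add: d_def)
  show ?thesis
  proof (intro exI[of _ d] conjI allI impI)
    show "d > 0" by (rule d)
    fix s assume s: "0 < s \<and> s < d"
    hence s0: "0 < s" and s1: "s \<le> 1" and sd1: "s < d1" and sK: "s < \<epsilon> / (2*K+2)"
      by (auto simp: d_def)
    define dE where "dE = xE (t+s) - E"
    define dP where "dP = xP (t+s) - P"
    have dE: "norm dE \<le> nuE * s"
    proof -
      have "norm (xE (t+s) - xE t) \<le> nuE * \<bar>(t+s) - t\<bar>"
        using adm t s0 unfolding admissible_evader_def by (metis add_increasing2 less_imp_le)
      thus ?thesis using s0 unfolding dE_def E_def by simp
    qed
    have dPv: "norm (dP - s *\<^sub>R vP) \<le> e * s"
      using d1(2)[of "t+s"] s0 sd1 t unfolding dP_def P_def by simp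
    have dP: "norm dP \<le> (u + e) * s"
    proof -
      have "norm dP \<le> norm (s *\<^sub>R vP) + norm (dP - s *\<^sub>R vP)" by (rule norm_triangle_sub)
      also have "norm (s *\<^sub>R vP) \<le> u * s" using uv s0 by (simp add: mult.commute mult_left_mono)
      finally show ?thesis using dPv by (simp add: algebra_simps)
    qed
    have X: "norm (dE - dP) \<le> k1 * s"
    proof -
      have "norm (dE - dP) \<le> norm dE + norm dP" by (rule norm_triangle_ineq4)
      thus ?thesis using dE dP by (simp add: k1_def algebra_simps)
    qed
    have Y: "norm (al *\<^sub>R dE - be *\<^sub>R dP) \<le> k2 * s"
    proof -
      have "norm (al *\<^sub>R dE - be *\<^sub>R dP) \<le> norm (al *\<^sub>R dE) + norm (be *\<^sub>R dP)" by (rule norm_triangle_ineq4)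
      also have "\<dots> = al * norm dE + be * norm dP"
        using al_pos be_eq al_pos by (simp add: abs_of_nonneg)
      also have "\<dots> \<le> al * (nuE * s) + be * ((u + e) * s)"
        using dE dP al_pos be_eq al_pos by (intro add_mono mult_left_mono) auto
      finally show ?thesis by (simp add: k2_def algebra_simps)
    qed
    have rem: "(\<bar>\<rho>\<bar> + ga*norm (dE - dP))*ga*(norm (dE - dP))^2/n + (norm (al *\<^sub>R dE - be *\<^sub>R dP))^2/2 \<le> K * s^2"
    proof -
      have a1: "ga*norm (dE - dP) \<le> ga*k1"
      proof -
        have "ga*norm (dE - dP) \<le> ga*(k1 * s)" using X ga by (intro mult_left_mono) auto
        also have "\<dots> \<le> ga*k1" using ga k1 s1 by (simp add: mult_left_le)
        finally show ?thesis .
      qed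
      have a2: "(norm (dE - dP))^2 \<le> (k1 * s)^2" using X by (intro power_mono) auto
      have a3: "(\<bar>\<rho>\<bar> + ga*norm (dE - dP))*ga*(norm (dE - dP))^2 \<le> (\<bar>\<rho>\<bar> + ga*k1)*ga*(k1 * s)^2"
        using a1 a2 ga k1 by (intro mult_mono) auto
      have a4: "(\<bar>\<rho>\<bar> + ga*norm (dE - dP))*ga*(norm (dE - dP))^2/n \<le> (\<bar>\<rho>\<bar> + ga*k1)*ga*(k1 * s)^2/n"
        using a3 n by (intro divide_right_mono) auto
      have a5: "(norm (al *\<^sub>R dE - be *\<^sub>R dP))^2/2 \<le> (k2 * s)^2/2" using Y by (intro divide_right_mono power_mono) auto
      have "(\<bar>\<rho>\<bar> + ga*k1)*ga*(k1 * s)^2/n + (k2 * s)^2/2 = K * s^2"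
        by (simp add: K_def power_mult_distrib field_simps)
      thus ?thesis using a4 a5 by linarith
    qed
    have Ks: "K * s^2 \<le> (\<epsilon>/2) * s"
    proof -
      have "K * s \<le> \<epsilon>/2"
      proof -
        have "K * s \<le> K * (\<epsilon> / (2*K+2))" using K sK by (intro mult_left_mono) auto
        also have "\<dots> \<le> \<epsilon>/2" using K ep by (simp add: field_simps)
        finally show ?thesis .
      qed
      hence "(K * s) * s \<le> (\<epsilon>/2) * s" using s0 by (intro mult_right_mono) auto
      thus ?thesis by (simp add: power2_eq_square mult.assoc)
    qed
    have l1: "ga*(dP \<bullet> z) \<ge> ga*(u*norm z) * s - e*(ga*norm z) * s"
    proof -
      have "dP \<bullet> z = s * (vP \<bullet> z) + (dP - s *\<^sub>R vP) \<bullet> z" by (simp add: inner_diff_left)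
      moreover have "(dP - s *\<^sub>R vP) \<bullet> z \<ge> - (e * s*norm z)"
      proof -
        have "\<bar>(dP - s *\<^sub>R vP) \<bullet> z\<bar> \<le> norm (dP - s *\<^sub>R vP) * norm z" by (rule Cauchy_Schwarz_ineq2)
        also have "\<dots> \<le> e * s * norm z" using dPv by (intro mult_right_mono) auto
        finally show ?thesis by linarith
      qed
      ultimately have "dP \<bullet> z \<ge> s * (u * norm z) - e * s*norm z" using vz by simp
      hence "ga*(dP \<bullet> z) \<ge> ga*(s * (u * norm z) - e * s*norm z)" using ga by (intro mult_left_mono) auto
      thus ?thesis by (simp add: algebra_simps)
    qed
    have l2: "ga*(dE \<bullet> w) \<le> ga*(nuE*norm w) * s"
    proof -
      have "dE \<bullet> w \<le> norm dE * norm w" by (rule norm_cauchy_schwarz)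
      also have "\<dots> \<le> nuE * s * norm w" using dE by (intro mult_right_mono) auto
      finally have "ga*(dE \<bullet> w) \<le> ga*(nuE * s * norm w)" using ga by (intro mult_left_mono) auto
      thus ?thesis by (simp add: algebra_simps)
    qed
    have inc: "hh (E+dE) (P+dP) - hh E P \<ge> ga*(dP \<bullet> z) - ga*(dE \<bullet> w)
       - ((\<bar>\<rho>\<bar> + ga*norm (dE - dP))*ga*(norm (dE - dP))^2/n + (norm (al *\<^sub>R dE - be *\<^sub>R dP))^2/2)"
      using hh_incr[where E=E and P=P and dE=dE and dP=dP] ne unfolding z_def w_def \<rho>_def n_def E_def P_def by simp
    have rt: "rate E P * s = ga*(u*norm z) * s - ga*(nuE*norm w) * s"
      unfolding rate_def z_def w_def by (simp add: algebra_simps)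
    have "hh (E+dE) (P+dP) - hh E P \<ge> rate E P * s - (\<epsilon>/2) * s - (\<epsilon>/2) * s"
      using inc l1 l2 rem Ks ez rt
    proof -
      have "e*(ga*norm z) * s \<le> (\<epsilon>/2) * s" using ez s0 by (intro mult_right_mono) auto
      thus ?thesis using inc l1 l2 rem Ks rt by linarith
    qed
    moreover have "E + dE = xE (t+s)" "P + dP = xP (t+s)" by (simp_all add: dE_def dP_def)
    ultimately have "hh (xE (t+s)) (xP (t+s)) - hh E P \<ge> rate E P * s - \<epsilon> * s" by (simp add: algebra_simps)
    thus "hh (xE t) (xP t) + (rate (xE t) (xP t) - \<epsilon>) * s \<le> hh (xE (t+s)) (xP (t+s))"
      unfolding E_def P_def by (simp add: algebra_simps)
  qed
qed

lemma RC_pos: "RC > 0"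
  using dpos ga_pos unfolding RC_def apoll_radius_def ga_def[symmetric] by (simp add: add_nonneg_pos)

lemma rho_le: "rho E P \<le> RC" using ga_pos by (simp add: rho_eq)

lemma hh_cont: "continuous_on S (\<lambda>t. hh (f t) (g t))" if "continuous_on S f" "continuous_on S g"
  unfolding hh_def rho_eq yv_eq by (intro continuous_intros that) auto

lemma rho_cont: "continuous_on S (\<lambda>t. rho (f t) (g t))" if "continuous_on S f" "continuous_on S g"
  unfolding rho_eq by (intro continuous_intros that)

lemma init_vals: "rho xE0 xP0 = \<delta>" "yv xE0 xP0 = 0" "hh xE0 xP0 = \<delta>^2/2"
  by (simp_all add: rho_def RC_def yv_def cC_def hh_def)

lemma rate_AB: "rate E P = ga * u * (norm (zv E P) - norm (nv *\<^sub>R wv E P))"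
proof -
  have nw: "nuE * norm (wv E P) = u * norm (nv *\<^sub>R wv E P)"
    using nv_pos by (simp add: nuE_mult)
  show ?thesis unfolding rate_def nw by (simp add: algebra_simps)
qed

lemma rate_id:
  assumes "E \<noteq> P"
  shows "rate E P * (norm (zv E P) + norm (nv *\<^sub>R wv E P)) = ga * u * ((1 - nv^2) * (2 * hh E P))"
proof -
  have rh: "norm ((1 / norm (E - P)) *\<^sub>R (E - P)) = 1" using assms by simp
  have w: "nv *\<^sub>R wv E P = (nv * rho E P) *\<^sub>R ((1 / norm (E - P)) *\<^sub>R (E - P)) + yv E P"
    using nv_pos by (simp add: wv_def scaleR_add_right)
  have nw: "nuE * norm (wv E P) = u * norm (nv *\<^sub>R wv E P)"
    using nv_pos by (simp add: nuE_mult)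
  have f1: "rate E P = ga * u * (norm (zv E P) - norm (nv *\<^sub>R wv E P))"
    unfolding rate_def nw by (simp add: algebra_simps)
  have f2: "(norm (zv E P) - norm (nv *\<^sub>R wv E P)) * (norm (zv E P) + norm (nv *\<^sub>R wv E P))
       = (norm (zv E P))^2 - (norm (nv *\<^sub>R wv E P))^2" by (simp add: power2_eq_square algebra_simps)
  have f3: "(norm (zv E P))^2 - (norm (nv *\<^sub>R wv E P))^2 = (1 - nv^2) * ((rho E P)^2 - (norm (yv E P))^2)"
    unfolding w zv_def by (rule norm_diff_sq_id[OF rh])
  have f4: "2 * hh E P = (rho E P)^2 - (norm (yv E P))^2" by (simp add: hh_def)
  show ?thesis by (rule aux_rate[OF f1 f2 f3 f4])
qed

lemma rate_nonneg:
  assumes "E \<noteq> P" "hh E P \<ge> 0"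
  shows "rate E P \<ge> 0"
proof -
  define A where "A = norm (zv E P)"
  define B where "B = norm (nv *\<^sub>R wv E P)"
  have A0: "A \<ge> 0" "B \<ge> 0" by (simp_all add: A_def B_def)
  have "rate E P * (A + B) \<ge> 0"
    unfolding A_def B_def rate_id[OF assms(1)] using ga_pos u_pos one_m assms(2) by simp
  moreover have "rate E P = ga * u * (A - B)" unfolding A_def B_def by (rule rate_AB)
  ultimately have "(ga * u) * ((A - B) * (A + B)) \<ge> 0" by (simp add: mult.assoc)
  hence pr: "(A - B) * (A + B) \<ge> 0"
  proof (rule contrapos_pp)
    assume "\<not> (A - B) * (A + B) \<ge> 0"
    hence n1: "(A - B) * (A + B) < 0" by linarith
    have n2: "ga * u > 0" using ga_pos u_pos by simp
    have "(ga * u) * ((A - B) * (A + B)) < 0" by (rule mult_pos_neg[OF n2 n1])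
    thus "\<not> (ga * u) * ((A - B) * (A + B)) \<ge> 0" by linarith
  qed
  have "A \<ge> B"
  proof (rule ccontr)
    assume "\<not> A \<ge> B"
    hence "(A - B) * (A + B) < 0" using A0 by (intro mult_neg_pos) auto
    thus False using pr by linarith
  qed
  thus ?thesis using \<open>rate E P = ga * u * (A - B)\<close> ga_pos u_pos by simp
qed

lemma rate_lower:
  assumes "E \<noteq> P" "hh E P \<ge> \<delta>^2/2" "rho E P > 0" "norm (yv E P) \<le> rho E P"
  shows "rate E P \<ge> ga * u * (1 - nv^2) * \<delta>^2 / (4 * RC)"
proof -
  define D where "D = norm (zv E P) + norm (nv *\<^sub>R wv E P)"
  define rv where "rv = (1 / norm (E - P)) *\<^sub>R (E - P)"
  have rh: "norm rv = 1" using assms by (simp add: rv_def)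
  have zv': "zv E P = rho E P *\<^sub>R rv + nv *\<^sub>R yv E P" by (simp add: zv_def rv_def)
  have wv': "nv *\<^sub>R wv E P = (nv * rho E P) *\<^sub>R rv + yv E P"
    using nv_pos by (simp add: wv_def rv_def scaleR_add_right)
  have z: "norm (zv E P) \<le> 2 * RC"
  proof -
    have "norm (zv E P) \<le> norm (rho E P *\<^sub>R rv) + norm (nv *\<^sub>R yv E P)"
      unfolding zv' by (rule norm_triangle_ineq)
    also have "\<dots> = rho E P + nv * norm (yv E P)" using assms(3) nv_pos rh by simp
    also have "\<dots> \<le> rho E P + 1 * rho E P" using nv_pos nv_lt1 assms(4)
      by (intro add_left_mono mult_mono) auto
    finally show ?thesis using rho_le[of E P] by simp
  qed
  have w: "norm (nv *\<^sub>R wv E P) \<le> 2 * RC"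
  proof -
    have "norm (nv *\<^sub>R wv E P) \<le> norm ((nv * rho E P) *\<^sub>R rv) + norm (yv E P)"
      unfolding wv' by (rule norm_triangle_ineq)
    also have "\<dots> = nv * rho E P + norm (yv E P)" using assms(3) nv_pos rh by simp
    also have "\<dots> \<le> 1 * rho E P + rho E P" using nv_pos nv_lt1 assms(3,4)
      by (intro add_mono mult_right_mono) auto
    finally show ?thesis using rho_le[of E P] by simp
  qed
  have D4: "D \<le> 4 * RC" using z w by (simp add: D_def)
  have num: "ga * u * ((1 - nv^2) * (2 * hh E P)) \<ge> ga * u * (1 - nv^2) * \<delta>^2"
  proof -
    have "\<delta>^2 \<le> 2 * hh E P" using assms(2) by linarith
    hence "(1 - nv^2) * (2 * hh E P) \<ge> (1 - nv^2) * \<delta>^2" by (rule mult_left_mono) (use one_m in auto)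
    hence "ga * u * ((1 - nv^2) * (2 * hh E P)) \<ge> ga * u * ((1 - nv^2) * \<delta>^2)"
      by (rule mult_left_mono) (use ga_pos u_pos in auto)
    thus ?thesis by (simp add: mult.assoc)
  qed
  have cpos: "ga * u * (1 - nv^2) * \<delta>^2 > 0" using ga_pos u_pos one_m dpos by simp
  have RD: "rate E P * D \<ge> ga * u * (1 - nv^2) * \<delta>^2" using num rate_id[OF assms(1)] by (simp add: D_def)
  have Dpos: "D > 0"
  proof (rule ccontr)
    assume "\<not> D > 0"
    moreover have "norm (zv E P) \<ge> 0" "norm (nv *\<^sub>R wv E P) \<ge> 0" by simp_all
    ultimately have "D = 0" unfolding D_def by linarith
    thus False using RD cpos by simp
  qed
  have "ga * u * (1 - nv^2) * \<delta>^2 / (4 * RC) \<le> ga * u * (1 - nv^2) * \<delta>^2 / D"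
    using cpos Dpos D4 by (intro divide_left_mono) auto
  also have "\<dots> \<le> rate E P" using RD Dpos by (simp add: divide_le_eq)
  finally show ?thesis .
qed

lemma evader_in_C:
  assumes "rho E P > 0" "norm (yv E P) \<le> rho E P"
  shows "E \<in> C_disc nuE u \<delta> xE0 xP0"
proof -
  have alb: "al - be = 1" using one_m by (simp add: al_eq be_eq field_simps)
  have e1: "E - cC = (E - apoll_center nuE u E P) + yv E P" by (simp add: yv_def)
  have e2: "E - apoll_center nuE u E P = (- be) *\<^sub>R (E - P)"
  proof -
    have "E - apoll_center nuE u E P = (1 - al) *\<^sub>R E + be *\<^sub>R P"
      by (simp add: apoll_center_def al_def be_def algebra_simps)
    also have "1 - al = - be" using alb by simp
    finally show ?thesis by (simp add: algebra_simps)
  qed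
  have "norm (E - cC) \<le> be * norm (E - P) + norm (yv E P)"
  proof -
    have "norm ((- be) *\<^sub>R (E - P) + yv E P) \<le> norm ((- be) *\<^sub>R (E - P)) + norm (yv E P)"
      by (rule norm_triangle_ineq)
    also have "norm ((- be) *\<^sub>R (E - P)) = be * norm (E - P)" using be_nonneg by simp
    finally show ?thesis unfolding e1 e2 .
  qed
  also have "\<dots> \<le> ga * norm (E - P) + rho E P" using be_le_ga assms(2) by (intro add_mono mult_right_mono) auto
  also have "\<dots> = RC" by (simp add: rho_eq)
  finally show ?thesis
    by (simp add: C_disc_def cC_def[symmetric] RC_def[symmetric] dist_norm norm_minus_commute)
qed

definition "traj t0 xE xP b \<longleftrightarrow> admissible_evader nuE t0 xE \<and> xE t0 = xE0 \<and> xP t0 = xP0 \<and>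
   continuous_on {t0..} xP \<and> t0 \<le> b \<and>
   (\<forall>t\<in>{t0..<b}. xE t \<noteq> xP t \<and>
      (xP has_vector_derivative pursuer_vel nuE u \<delta> xE0 xP0 (xE t) (xP t)) (at t within {t0..}))"
  for t0 :: real and xE xP :: "real \<Rightarrow> pt" and b :: real

lemma traj_mono: "traj t0 xE xP b \<Longrightarrow> t0 \<le> b' \<Longrightarrow> b' \<le> b \<Longrightarrow> traj t0 xE xP b'"
  unfolding traj_def by auto

lemma traj_cont:
  assumes "traj t0 xE xP b"
  shows "continuous_on {t0..b} (\<lambda>t. hh (xE t) (xP t))" "continuous_on {t0..b} (\<lambda>t. rho (xE t) (xP t))"
proof -
  have "continuous_on {t0..} xE" using assms nuE_pos unfolding traj_def by (intro evader_cont) auto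
  hence a: "continuous_on {t0..b} xE" by (rule continuous_on_subset) auto
  have "continuous_on {t0..} xP" using assms unfolding traj_def by auto
  hence b: "continuous_on {t0..b} xP" by (rule continuous_on_subset) auto
  show "continuous_on {t0..b} (\<lambda>t. hh (xE t) (xP t))" by (rule hh_cont[OF a b])
  show "continuous_on {t0..b} (\<lambda>t. rho (xE t) (xP t))" by (rule rho_cont[OF a b])
qed

lemma phase1:
  assumes tr: "traj t0 xE xP b"
  shows "hh (xE b) (xP b) \<ge> \<delta>^2/2"
proof -
  have tb: "t0 \<le> b" using tr by (simp add: traj_def)
  have f0: "hh (xE t0) (xP t0) = \<delta>^2/2" using tr init_vals by (simp add: traj_def)
  have "hh (xE t0) (xP t0) + 0 * (b - t0) \<le> hh (xE b) (xP b)"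
  proof (rule dini_comp[where L=0])
    show "t0 \<le> b" by (rule tb)
    show "continuous_on {t0..b} (\<lambda>t. hh (xE t) (xP t))" by (rule traj_cont(1)[OF tr])
    show "(0::real) \<le> 0" by simp
    have "0 < \<delta>^2/2" using dpos by simp
    thus "0 < hh (xE t0) (xP t0)" using f0 by linarith
  next
    fix t \<epsilon> :: real assume t: "t \<in> {t0..<b}" and h: "0 < hh (xE t) (xP t)" and ep: "0 < \<epsilon>"
    have adm: "admissible_evader nuE t0 xE" and ne: "xE t \<noteq> xP t"
      and der: "(xP has_vector_derivative pursuer_vel nuE u \<delta> xE0 xP0 (xE t) (xP t)) (at t within {t0..})"
      using tr t unfolding traj_def by auto
    obtain d where d: "d > 0" "\<forall>s. 0 < s \<and> s < d \<longrightarrow>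
           hh (xE t) (xP t) + (rate (xE t) (xP t) - \<epsilon>) * s \<le> hh (xE (t+s)) (xP (t+s))"
      using local_rate[OF adm _ ne der ep] t by auto
    have r0: "rate (xE t) (xP t) \<ge> 0" using rate_nonneg[OF ne] h by simp
    show "\<exists>d>0. \<forall>s. 0 < s \<and> s < d \<longrightarrow> hh (xE t) (xP t) + (0 - \<epsilon>) * s \<le> hh (xE (t + s)) (xP (t + s))"
    proof (intro exI[of _ d] conjI allI impI)
      show "d > 0" by (rule d)
      fix s assume s: "0 < s \<and> s < d"
      have "(0 - \<epsilon>) * s \<le> (rate (xE t) (xP t) - \<epsilon>) * s" using r0 s by (intro mult_right_mono) auto
      thus "hh (xE t) (xP t) + (0 - \<epsilon>) * s \<le> hh (xE (t + s)) (xP (t + s))" using d(2) s by fastforce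
    qed
  qed
  thus ?thesis using f0 by simp
qed

lemma phase2:
  assumes tr: "traj t0 xE xP b"
  shows "rho (xE b) (xP b) > 0"
proof (rule ccontr)
  assume "\<not> ?thesis"
  hence rb: "rho (xE b) (xP b) \<le> 0" by simp
  have tb: "t0 \<le> b" using tr by (simp add: traj_def)
  have r0: "rho (xE t0) (xP t0) = \<delta>" using tr init_vals by (simp add: traj_def)
  obtain x where x: "t0 \<le> x" "x \<le> b" "rho (xE x) (xP x) = 0"
    using IVT2'[of "\<lambda>t. rho (xE t) (xP t)" b 0 t0, OF rb _ tb traj_cont(2)[OF tr]] r0 dpos by auto
  have "hh (xE x) (xP x) \<ge> \<delta>^2/2" by (rule phase1[OF traj_mono[OF tr x(1,2)]])
  moreover have "hh (xE x) (xP x) \<le> 0" using x(3) by (simp add: hh_def)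
  moreover have "0 < \<delta>^2/2" using dpos by simp
  ultimately show False by linarith
qed

lemma phase12_consequences:
  assumes tr: "traj t0 xE xP b"
  shows "norm (yv (xE b) (xP b)) \<le> rho (xE b) (xP b)" "xE b \<in> C_disc nuE u \<delta> xE0 xP0"
proof -
  have h: "hh (xE b) (xP b) \<ge> \<delta>^2/2" by (rule phase1[OF tr])
  have r: "rho (xE b) (xP b) > 0" by (rule phase2[OF tr])
  have "(norm (yv (xE b) (xP b)))^2 \<le> (rho (xE b) (xP b))^2"
  proof -
    have "0 \<le> \<delta>^2/2" by simp
    thus ?thesis using h unfolding hh_def diff_divide_distrib by linarith
  qed
  thus y: "norm (yv (xE b) (xP b)) \<le> rho (xE b) (xP b)"
    by (rule power2_le_imp_le) (use r in auto)
  show "xE b \<in> C_disc nuE u \<delta> xE0 xP0" by (rule evader_in_C[OF r y])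
qed

definition "cst = ga * u * (1 - nv^2) * \<delta>^2 / (4 * RC)"

lemma cst_pos: "cst > 0" using ga_pos u_pos one_m dpos RC_pos by (simp add: cst_def)

lemma phase3:
  assumes tr: "traj t0 xE xP b"
  shows "cst * (b - t0) \<le> RC^2 / 2"
proof -
  have tb: "t0 \<le> b" using tr by (simp add: traj_def)
  have f0: "hh (xE t0) (xP t0) = \<delta>^2/2" using tr init_vals by (simp add: traj_def)
  have "hh (xE t0) (xP t0) + cst * (b - t0) \<le> hh (xE b) (xP b)"
  proof (rule dini_comp[where L=0])
    show "t0 \<le> b" by (rule tb)
    show "continuous_on {t0..b} (\<lambda>t. hh (xE t) (xP t))" by (rule traj_cont(1)[OF tr])
    show "0 \<le> cst" using cst_pos by simp
    have "0 < \<delta>^2/2" using dpos by simp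
    thus "0 < hh (xE t0) (xP t0)" using f0 by linarith
  next
    fix t \<epsilon> :: real assume t: "t \<in> {t0..<b}" and h: "0 < hh (xE t) (xP t)" and ep: "0 < \<epsilon>"
    have adm: "admissible_evader nuE t0 xE" and ne: "xE t \<noteq> xP t"
      and der: "(xP has_vector_derivative pursuer_vel nuE u \<delta> xE0 xP0 (xE t) (xP t)) (at t within {t0..})"
      using tr t unfolding traj_def by auto
    have trt: "traj t0 xE xP t" using traj_mono[OF tr] t by auto
    obtain d where d: "d > 0" "\<forall>s. 0 < s \<and> s < d \<longrightarrow>
           hh (xE t) (xP t) + (rate (xE t) (xP t) - \<epsilon>) * s \<le> hh (xE (t+s)) (xP (t+s))"
      using local_rate[OF adm _ ne der ep] t by auto
    have r0: "rate (xE t) (xP t) \<ge> cst"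
      unfolding cst_def
      by (rule rate_lower[OF ne phase1[OF trt] phase2[OF trt] phase12_consequences(1)[OF trt]])
    show "\<exists>d>0. \<forall>s. 0 < s \<and> s < d \<longrightarrow> hh (xE t) (xP t) + (cst - \<epsilon>) * s \<le> hh (xE (t + s)) (xP (t + s))"
    proof (intro exI[of _ d] conjI allI impI)
      show "d > 0" by (rule d)
      fix s assume s: "0 < s \<and> s < d"
      have "(cst - \<epsilon>) * s \<le> (rate (xE t) (xP t) - \<epsilon>) * s" using r0 s by (intro mult_right_mono) auto
      moreover have "hh (xE t) (xP t) + (rate (xE t) (xP t) - \<epsilon>) * s \<le> hh (xE (t + s)) (xP (t + s))"
        using d(2) s by blast
      ultimately show "hh (xE t) (xP t) + (cst - \<epsilon>) * s \<le> hh (xE (t + s)) (xP (t + s))" by linarith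
    qed
  qed
  moreover have "hh (xE b) (xP b) \<le> RC^2/2"
  proof -
    have "hh (xE b) (xP b) \<le> (rho (xE b) (xP b))^2/2" by (simp add: hh_def)
    also have "(rho (xE b) (xP b))^2 \<le> RC^2" using phase2[OF tr] rho_le by (intro power_mono) auto
    finally show ?thesis by simp
  qed
  moreover have "0 \<le> \<delta>^2/2" by simp
  ultimately show ?thesis using f0 by linarith
qed

end

lemma capture_lemma:
  fixes N :: nat and u :: "nat \<Rightarrow> real" and nuE t0 \<delta> :: real
    and xE0 :: pt and xP0 :: "nat \<Rightarrow> pt" and xE :: "real \<Rightarrow> pt" and xP :: "nat \<Rightarrow> real \<Rightarrow> pt"
  assumes N: "N \<ge> 1" and nuE: "0 < nuE"
    and uu: "\<forall>i<N. 0 < u i \<and> nu_ratio nuE (u i) < 1"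
    and ne0: "\<forall>i<N. xE0 \<noteq> xP0 i" and dp: "0 < \<delta>"
    and adm: "admissible_evader nuE t0 xE" and e0: "xE t0 = xE0" and p0: "\<forall>i<N. xP i t0 = xP0 i"
    and fl: "follows_law N u nuE \<delta> t0 xE xP"
  shows "\<exists>T. capture_time N t0 xE xP T \<and>
           (\<forall>s\<in>{t0..T}. xE s \<in> (\<Inter>i\<in>{..<N}. C_disc nuE (u i) \<delta> xE0 (xP0 i)))"
proof -
  have P: "pur nuE (u i) \<delta> xE0 (xP0 i)" if "i < N" for i
    using that uu ne0 nuE dp by unfold_locales auto
  have tr: "pur.traj nuE (u i) \<delta> xE0 (xP0 i) t0 xE (xP i) b"
    if i: "i < N" and b: "t0 \<le> b" and nc: "\<forall>s\<in>{t0..<b}. \<not> captured N xE xP s" for i b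
  proof -
    have c: "continuous_on {t0..} (xP i)" using fl i by (simp add: follows_law_def)
    have "xE t \<noteq> xP i t \<and>
      (xP i has_vector_derivative pursuer_vel nuE (u i) \<delta> xE0 (xP0 i) (xE t) (xP i t)) (at t within {t0..})"
      if t: "t \<in> {t0..<b}" for t
    proof
      have "\<not> captured N xE xP t" using nc t by auto
      thus "xE t \<noteq> xP i t" using i unfolding captured_def by auto
      have "\<forall>s\<in>{t0..t}. \<not> captured N xE xP s" using nc t by auto
      hence "\<forall>i<N. (xP i has_vector_derivative
                   pursuer_vel nuE (u i) \<delta> (xE t0) (xP i t0) (xE t) (xP i t)) (at t within {t0..})"
        using fl t unfolding follows_law_def by auto
      thus "(xP i has_vector_derivative pursuer_vel nuE (u i) \<delta> xE0 (xP0 i) (xE t) (xP i t)) (at t within {t0..})"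
        using i e0 p0 by auto
    qed
    thus ?thesis unfolding pur.traj_def[OF P[OF i]] using adm e0 p0 i c b by auto
  qed
  define K where "K = {t. t0 \<le> t \<and> captured N xE xP t}"
  have Kne: "K \<noteq> {}"
  proof
    assume K0: "K = {}"
    have P0: "pur nuE (u 0) \<delta> xE0 (xP0 0)" using P N by auto
    define c where "c = pur.cst nuE (u 0) \<delta> xE0 (xP0 0)"
    define R where "R = pur.RC nuE (u 0) \<delta> xE0 (xP0 0)"
    have c0: "c > 0" unfolding c_def by (rule pur.cst_pos[OF P0])
    define b where "b = t0 + R^2 / (2*c) + 1"
    have R2: "R^2/(2*c) \<ge> 0" using c0 by simp
    have b: "t0 \<le> b" using R2 by (simp add: b_def)
    have "pur.traj nuE (u 0) \<delta> xE0 (xP0 0) t0 xE (xP 0) b"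
      using tr[of 0 b] N b K0 unfolding K_def by auto
    hence "c * (b - t0) \<le> R^2/2" unfolding c_def R_def by (rule pur.phase3[OF P0])
    moreover have "c * (b - t0) = R^2/2 + c" using c0 by (simp add: b_def field_simps)
    ultimately show False using c0 by linarith
  qed
  have Kcl: "closed K"
  proof -
    have Keq: "K = (\<Union>i\<in>{..<N}. {t0..} \<inter> (\<lambda>t. xP i t - xE t) -` {0})"
      unfolding K_def captured_def by auto
    moreover have "closed ({t0..} \<inter> (\<lambda>t. xP i t - xE t) -` {0})" if "i < N" for i
    proof (rule continuous_closed_preimage)
      have "continuous_on {t0..} xE" by (rule evader_cont[OF adm]) (use nuE in simp)
      moreover have "continuous_on {t0..} (xP i)" using fl that by (simp add: follows_law_def)
      ultimately show "continuous_on {t0..} (\<lambda>t. xP i t - xE t)" by (intro continuous_intros)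
    qed auto
    thus ?thesis unfolding Keq by (intro closed_UN) auto
  qed
  have Kbdd: "bdd_below K" unfolding K_def by (rule bdd_belowI[of _ t0]) auto
  define T where "T = Inf K"
  have TK: "T \<in> K" unfolding T_def by (rule closed_contains_Inf[OF Kne Kbdd Kcl])
  have before: "\<not> captured N xE xP s" if "s \<in> {t0..<T}" for s
  proof
    assume "captured N xE xP s"
    hence "s \<in> K" using that by (auto simp: K_def)
    hence "T \<le> s" unfolding T_def using Kbdd by (rule cInf_lower)
    thus False using that by auto
  qed
  have ct: "capture_time N t0 xE xP T" using TK before by (auto simp: K_def capture_time_def)
  moreover have "\<forall>s\<in>{t0..T}. xE s \<in> (\<Inter>i\<in>{..<N}. C_disc nuE (u i) \<delta> xE0 (xP0 i))"
  proof (intro ballI INT_I)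
    fix s i assume s: "s \<in> {t0..T}" and i: "i \<in> {..<N}"
    have "pur.traj nuE (u i) \<delta> xE0 (xP0 i) t0 xE (xP i) s"
      using tr[of i s] i s before by auto
    moreover have Pi: "pur nuE (u i) \<delta> xE0 (xP0 i)" using P i by auto
    ultimately show "xE s \<in> C_disc nuE (u i) \<delta> xE0 (xP0 i)"
      using pur.phase12_consequences(2) by blast
  qed
  ultimately show ?thesis by blast
qed

theorem mainTheorem8:
  fixes N :: nat and u :: "nat \<Rightarrow> real" and nuE t0 :: real
    and xE0 :: pt and xP0 :: "nat \<Rightarrow> pt"
  assumes "N \<ge> 1"
    and "0 < nuE"
    and "\<forall>i<N. 0 < u i \<and> nu_ratio nuE (u i) < 1"
    and "\<forall>i<N. xE0 \<noteq> xP0 i"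
  shows
    "(\<forall>\<delta>>0. \<forall>xE xP.
        admissible_evader nuE t0 xE \<and> xE t0 = xE0 \<and> (\<forall>i<N. xP i t0 = xP0 i) \<and>
        follows_law N u nuE \<delta> t0 xE xP \<longrightarrow>
        (\<exists>T. capture_time N t0 xE xP T \<and>
             xE T \<in> (\<Inter>i\<in>{..<N}. C_disc nuE (u i) \<delta> xE0 (xP0 i))))
     \<and>
     (\<forall>Tg :: pt set. closed Tg \<and>
        (\<Inter>i\<in>{..<N}. apoll_disc nuE (u i) xE0 (xP0 i)) \<inter> Tg = {} \<longrightarrow>
        (\<exists>\<delta>0>0. \<forall>\<delta>. 0 < \<delta> \<and> \<delta> < \<delta>0 \<longrightarrow>
           (\<forall>xE xP.
              admissible_evader nuE t0 xE \<and> xE t0 = xE0 \<and> (\<forall>i<N. xP i t0 = xP0 i) \<and>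
              follows_law N u nuE \<delta> t0 xE xP \<longrightarrow>
              pursuers_win N t0 Tg xE xP)))"
proof (intro conjI allI impI)
  fix \<delta> :: real and xE :: "real \<Rightarrow> pt" and xP :: "nat \<Rightarrow> real \<Rightarrow> pt"
  assume "0 < \<delta>" and h: "admissible_evader nuE t0 xE \<and> xE t0 = xE0 \<and> (\<forall>i<N. xP i t0 = xP0 i) \<and>
        follows_law N u nuE \<delta> t0 xE xP"
  then obtain T where "capture_time N t0 xE xP T"
     "\<forall>s\<in>{t0..T}. xE s \<in> (\<Inter>i\<in>{..<N}. C_disc nuE (u i) \<delta> xE0 (xP0 i))"
    using capture_lemma[of N nuE u xE0 xP0 \<delta> t0 xE xP] assms by blast
  moreover have "T \<in> {t0..T}" using \<open>capture_time N t0 xE xP T\<close> by (simp add: capture_time_def)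
  ultimately show "\<exists>T. capture_time N t0 xE xP T \<and>
             xE T \<in> (\<Inter>i\<in>{..<N}. C_disc nuE (u i) \<delta> xE0 (xP0 i))" by blast
next
  fix Tg :: "pt set"
  assume hT: "closed Tg \<and> (\<Inter>i\<in>{..<N}. apoll_disc nuE (u i) xE0 (xP0 i)) \<inter> Tg = {}"
  define cc where "cc i = apoll_center nuE (u i) xE0 (xP0 i)" for i
  define R where "R i = apoll_radius nuE (u i) xE0 (xP0 i)" for i
  define phi where "phi x = (\<Sum>i<N. max 0 (dist x (cc i) - R i))" for x
  define KK where "KK = Tg \<inter> cball (cc 0) (R 0 + 1)"
  have Cd: "C_disc nuE (u i) d xE0 (xP0 i) = cball (cc i) (R i + d)" for i d
    by (simp add: C_disc_def cc_def R_def)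
  have Ad: "apoll_disc nuE (u i) xE0 (xP0 i) = cball (cc i) (R i)" for i
    by (simp add: apoll_disc_def cc_def R_def)
  have phi_le: "phi x \<le> real N * d" if "\<forall>i<N. dist (cc i) x \<le> R i + d" "d \<ge> 0" for x d
  proof -
    have "phi x \<le> of_nat (card {..<N}) * d" unfolding phi_def
      by (rule sum_bounded_above) (use that in \<open>auto simp: dist_commute\<close>)
    thus ?thesis by simp
  qed
  have phi_pos: "phi x > 0" if "x \<in> Tg" for x
  proof -
    have "x \<notin> (\<Inter>i\<in>{..<N}. apoll_disc nuE (u i) xE0 (xP0 i))" using hT that by auto
    then obtain i where i: "i < N" "dist (cc i) x > R i" unfolding Ad by auto
    have "max 0 (dist x (cc i) - R i) \<le> phi x" unfolding phi_def
      by (rule member_le_sum) (use i in auto)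
    moreover have "max 0 (dist x (cc i) - R i) > 0" using i by (simp add: dist_commute)
    ultimately show ?thesis by linarith
  qed
  have ex: "\<exists>m>0. \<forall>x\<in>KK. m \<le> phi x"
  proof (cases "KK = {}")
    case True thus ?thesis by (intro exI[of _ 1]) auto
  next
    case False
    have "compact KK" unfolding KK_def using hT by (intro closed_Int_compact) auto
    moreover have "continuous_on KK phi" unfolding phi_def by (intro continuous_intros)
    ultimately obtain x where x: "x \<in> KK" "\<forall>y\<in>KK. phi x \<le> phi y"
      using continuous_attains_inf[OF _ False] by blast
    have "phi x > 0" using x(1) phi_pos unfolding KK_def by auto
    thus ?thesis using x by blast
  qed
  then obtain m where m: "m > 0" "\<forall>x\<in>KK. m \<le> phi x" by blast
  have Npos: "real N > 0" using assms(1) by simp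
  define \<delta>0 where "\<delta>0 = min 1 (m / real N)"
  have d0: "\<delta>0 > 0" using m Npos by (simp add: \<delta>0_def)
  show "\<exists>\<delta>0>0. \<forall>\<delta>. 0 < \<delta> \<and> \<delta> < \<delta>0 \<longrightarrow>
           (\<forall>xE xP.
              admissible_evader nuE t0 xE \<and> xE t0 = xE0 \<and> (\<forall>i<N. xP i t0 = xP0 i) \<and>
              follows_law N u nuE \<delta> t0 xE xP \<longrightarrow>
              pursuers_win N t0 Tg xE xP)"
  proof (intro exI[of _ \<delta>0] conjI allI impI)
    show "\<delta>0 > 0" by (rule d0)
    fix \<delta> :: real and xE :: "real \<Rightarrow> pt" and xP :: "nat \<Rightarrow> real \<Rightarrow> pt"
    assume dd: "0 < \<delta> \<and> \<delta> < \<delta>0" and h: "admissible_evader nuE t0 xE \<and> xE t0 = xE0 \<and> (\<forall>i<N. xP i t0 = xP0 i) \<and>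
        follows_law N u nuE \<delta> t0 xE xP"
    then obtain T where T: "capture_time N t0 xE xP T"
       "\<forall>s\<in>{t0..T}. xE s \<in> (\<Inter>i\<in>{..<N}. C_disc nuE (u i) \<delta> xE0 (xP0 i))"
      using capture_lemma[of N nuE u xE0 xP0 \<delta> t0 xE xP] assms by blast
    have "xE s \<notin> Tg" if s: "s \<in> {t0..T}" for s
    proof
      assume inT: "xE s \<in> Tg"
      have inC: "\<forall>i<N. dist (cc i) (xE s) \<le> R i + \<delta>" using T(2) s unfolding Cd by auto
      have "dist (cc 0) (xE s) \<le> R 0 + 1"
      proof -
        have "\<delta> < 1" using dd unfolding \<delta>0_def by auto
        moreover have "dist (cc 0) (xE s) \<le> R 0 + \<delta>" using inC assms(1) by auto
        ultimately show ?thesis by linarith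
      qed
      hence "xE s \<in> KK" using inT by (simp add: KK_def)
      hence "m \<le> phi (xE s)" using m by auto
      moreover have "phi (xE s) \<le> real N * \<delta>" by (rule phi_le) (use inC dd in auto)
      moreover have "real N * \<delta> < m"
      proof -
        have "\<delta> < m / real N" using dd unfolding \<delta>0_def by auto
        thus ?thesis using Npos by (simp add: field_simps)
      qed
      ultimately show False by linarith
    qed
    thus "pursuers_win N t0 Tg xE xP" using T(1) unfolding pursuers_win_def by blast
  qed
qed

end
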